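(* For each positive integer $k$, let $\alpha(k)$ be the infimum of those $\alpha$ such that every election has a committee of size $k$ that is $\alpha$-undominated. Then $\frac{\alpha(k)}{1 - \ln\alpha(k)} \leq \frac{2}{k+1}$, and $$\alpha(k) \leq \min_{1 \leq k' < k} \left(\left(\frac{k'}{k}\right)^2 \alpha(k') + \frac{4\ln \frac{k}{k'}}{k - k'}\right).$$
   Context: An election consists of a finite set $V$ of $n$ voters, a finite set $C$ of candidates, and for each voter $v$ a strict linear order $\succ_v$ on $C$. A committee is a subset $S \subseteq C$. For a candidate $a$ and committee $S$, write $a \succ_v S$ if $v$ prefers $a$ to every member of $S$, and let $\frac1n|a \succ S| = \frac1n|\{v \in V : a \succ_v S\}|$. A committee $S$ is $\alpha$-undominated if for every candidate $a \in C$, $\frac1n|a \succ S| < \alpha$. The minimum over $1 \le k' < k$ is over integers $k'$. *)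

theory Defs
  imports "HOL-Analysis.Analysis"
begin

text \<open>An election: a finite nonempty voter set V, a finite candidate set C, and for each
voter v a strict linear order P v on C; (a, b) \<in> P v means that v prefers a to b.
Voters and candidates are encoded as natural numbers (any finite election is isomorphic
to one of this form).\<close>

definition election :: "nat set \<Rightarrow> nat set \<Rightarrow> (nat \<Rightarrow> (nat \<times> nat) set) \<Rightarrow> bool" where
  "election V C P \<longleftrightarrow> finite V \<and> V \<noteq> {} \<and> finite C \<and>
     (\<forall>v\<in>V. strict_linear_order_on C (P v) \<and> P v \<subseteq> C \<times> C)"

definition dom_frac :: "nat set \<Rightarrow> (nat \<Rightarrow> (nat \<times> nat) set) \<Rightarrow> nat \<Rightarrow> nat set \<Rightarrow> real" where
  "dom_frac V P a S = real (card {v \<in> V. \<forall>b\<in>S. (a, b) \<in> P v}) / real (card V)"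

definition undominated :: "real \<Rightarrow> nat set \<Rightarrow> nat set \<Rightarrow> (nat \<Rightarrow> (nat \<times> nat) set) \<Rightarrow> nat set \<Rightarrow> bool" where
  "undominated \<alpha> V C P S \<longleftrightarrow> (\<forall>a\<in>C. dom_frac V P a S < \<alpha>)"

definition alpha :: "nat \<Rightarrow> real" where
  "alpha k = Inf {\<alpha>. \<forall>V C P. election V C P \<and> k \<le> card C \<longrightarrow>
      (\<exists>S. S \<subseteq> C \<and> card S = k \<and> undominated \<alpha> V C P S)}"

end

theory Submission
  imports Defs
begin



lemma exp_chord:
  fixes \<eta> x :: real
  assumes "0 \<le> x" "x \<le> 1"
  shows "exp (- \<eta> * x) \<le> 1 - (1 - exp (- \<eta>)) * x"
proof -
  have "exp ((1 - x) *\<^sub>R 0 + x *\<^sub>R (- \<eta>)) \<le> (1 - x) * exp 0 + x * exp (- \<eta>)"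
    using assms by (intro convex_onD[OF exp_convex]) auto
  then show ?thesis by (simp add: algebra_simps)
qed

lemma mw:
  fixes R :: "'r set" and Cs :: "'c set" and M :: "'r \<Rightarrow> 'c \<Rightarrow> real"
  assumes fin: "finite R" and ne: "R \<noteq> {}"
    and bnd: "\<And>r c. r \<in> R \<Longrightarrow> c \<in> Cs \<Longrightarrow> 0 \<le> M r c \<and> M r c \<le> 1"
    and br: "\<And>w. (\<And>r. r \<in> R \<Longrightarrow> 0 \<le> w r) \<Longrightarrow> sum w R = 1 \<Longrightarrow> \<exists>c\<in>Cs. v0 \<le> (\<Sum>r\<in>R. w r * M r c)"
    and v0: "0 \<le> v0" "v0 \<le> 1" and eta: "0 < \<eta>"
  shows "\<exists>cs. length cs = T \<and> set cs \<subseteq> Cs \<and>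
     (\<forall>r\<in>R. real T * v0 * (1 - exp (- \<eta>)) - ln (card R) \<le> \<eta> * sum_list (map (M r) cs))"
proof -
  define \<kappa> where "\<kappa> = 1 - exp (- \<eta>)"
  have k0: "0 < \<kappa>" "\<kappa> < 1" using eta by (auto simp: \<kappa>_def)
  define \<Phi> where "\<Phi> cs = (\<Sum>r\<in>R. exp (- \<eta> * sum_list (map (M r) cs)))" for cs
  have Phipos: "0 < \<Phi> cs" for cs
    unfolding \<Phi>_def using fin ne by (intro sum_pos) auto
  have step: "\<exists>c\<in>Cs. \<Phi> (c # cs) \<le> \<Phi> cs * (1 - \<kappa> * v0)" for cs
  proof -
    define w where "w r = exp (- \<eta> * sum_list (map (M r) cs)) / \<Phi> cs" for r
    have "sum w R = 1" unfolding w_def using Phipos[of cs]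
      by (simp add: sum_divide_distrib[symmetric] \<Phi>_def)
    moreover have "\<And>r. r \<in> R \<Longrightarrow> 0 \<le> w r" unfolding w_def using Phipos[of cs] by simp
    ultimately obtain c where c: "c \<in> Cs" "v0 \<le> (\<Sum>r\<in>R. w r * M r c)" using br by blast
    have "\<Phi> (c # cs) = (\<Sum>r\<in>R. exp (- \<eta> * sum_list (map (M r) cs)) * exp (- \<eta> * M r c))"
      unfolding \<Phi>_def by (simp add: algebra_simps exp_add[symmetric])
    also have "\<dots> \<le> (\<Sum>r\<in>R. exp (- \<eta> * sum_list (map (M r) cs)) * (1 - \<kappa> * M r c))"
      using bnd c(1) unfolding \<kappa>_def
      by (intro sum_mono mult_left_mono) (auto intro!: exp_chord[of _ \<eta>, simplified])
    also have "\<dots> = \<Phi> cs - \<kappa> * (\<Sum>r\<in>R. exp (- \<eta> * sum_list (map (M r) cs)) * M r c)"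
      unfolding \<Phi>_def by (simp add: algebra_simps sum_subtractf sum_distrib_left)
    also have "(\<Sum>r\<in>R. exp (- \<eta> * sum_list (map (M r) cs)) * M r c) = \<Phi> cs * (\<Sum>r\<in>R. w r * M r c)"
      unfolding w_def using Phipos[of cs] by (simp add: sum_distrib_left)
    finally have "\<Phi> (c # cs) \<le> \<Phi> cs - \<kappa> * (\<Phi> cs * (\<Sum>r\<in>R. w r * M r c))" .
    also have "\<dots> \<le> \<Phi> cs - \<kappa> * (\<Phi> cs * v0)"
      using c(2) k0 Phipos[of cs] by (intro diff_left_mono mult_left_mono) auto
    finally show ?thesis using c(1) by (auto simp: algebra_simps)
  qed
  have ind: "\<exists>cs. length cs = n \<and> set cs \<subseteq> Cs \<and> \<Phi> cs \<le> card R * (1 - \<kappa> * v0) ^ n" for n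
  proof (induction n)
    case 0
    then show ?case by (auto simp: \<Phi>_def)
  next
    case (Suc n)
    then obtain cs where cs: "length cs = n" "set cs \<subseteq> Cs" "\<Phi> cs \<le> card R * (1 - \<kappa> * v0) ^ n" by blast
    obtain c where c: "c \<in> Cs" "\<Phi> (c # cs) \<le> \<Phi> cs * (1 - \<kappa> * v0)" using step by blast
    have nn: "0 \<le> 1 - \<kappa> * v0" using k0 v0 by (smt (verit) mult_le_one)
    have "\<Phi> (c # cs) \<le> card R * (1 - \<kappa> * v0) ^ n * (1 - \<kappa> * v0)"
      using c(2) cs(3) nn by (meson mult_right_mono order_trans)
    then show ?case using cs c by (intro exI[of _ "c # cs"]) (auto simp: algebra_simps)
  qed
  obtain cs where cs: "length cs = T" "set cs \<subseteq> Cs" "\<Phi> cs \<le> card R * (1 - \<kappa> * v0) ^ T"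
    using ind by blast
  have nn: "0 \<le> 1 - \<kappa> * v0" using k0 v0 by (smt (verit) mult_le_one)
  have "(1 - \<kappa> * v0) ^ T \<le> exp (- \<kappa> * v0) ^ T"
    using nn by (intro power_mono) (auto simp: exp_ge_add_one_self[of "- \<kappa> * v0", simplified] )
  also have "\<dots> = exp (- (real T * \<kappa> * v0))" by (simp add: exp_of_nat_mult[symmetric])
  finally have pw: "(1 - \<kappa> * v0) ^ T \<le> exp (- (real T * \<kappa> * v0))" .
  have cR: "0 < real (card R)" using fin ne by (simp add: card_gt_0_iff)
  show ?thesis
  proof (intro exI[of _ cs] conjI ballI cs(1) cs(2))
    fix r assume r: "r \<in> R"
    have "exp (- \<eta> * sum_list (map (M r) cs)) \<le> \<Phi> cs"
      unfolding \<Phi>_def using r fin by (intro member_le_sum) auto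
    also have "\<dots> \<le> card R * exp (- (real T * \<kappa> * v0))"
      using cs(3) pw cR by (meson mult_left_mono less_imp_le order_trans)
    also have "\<dots> = exp (ln (card R) - real T * \<kappa> * v0)"
      using cR by (simp add: exp_diff exp_minus field_simps)
    finally have "- \<eta> * sum_list (map (M r) cs) \<le> ln (card R) - real T * \<kappa> * v0" by simp
    then show "real T * v0 * (1 - exp (- \<eta>)) - ln (card R) \<le> \<eta> * sum_list (map (M r) cs)"
      unfolding \<kappa>_def by (simp add: algebra_simps)
  qed
qed



lemma el_facts:
  assumes "election V C P" "v \<in> V"
  shows "trans (P v)" "\<And>x. (x, x) \<notin> P v" "total_on C (P v)" "P v \<subseteq> C \<times> C"
  using assms unfolding election_def strict_linear_order_on_def irrefl_def by auto

lemma sum_ind_card: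
  assumes "finite V" "B \<subseteq> V"
  shows "(\<Sum>v\<in>V. (if v \<in> B then 1 else 0 :: real)) = real (card B)"
proof -
  have "(\<Sum>v\<in>V. (if v \<in> B then 1 else 0 :: real)) = (\<Sum>v\<in>V \<inter> B. 1)"
    using assms by (simp add: sum.If_cases)
  also have "V \<inter> B = B" using assms by auto
  finally show ?thesis by simp
qed

lemma best_resp:
  assumes el: "election V C P"
   and R_def: "R = {(a,B). a \<in> C \<and> B \<subseteq> V \<and> card B = j}"
   and w0: "\<And>r. r \<in> R \<Longrightarrow> 0 \<le> w r" and w1: "sum w R = 1"
  shows "\<exists>c\<in>C. real j^2/(2*real(card V)^2) \<le>
     (\<Sum>r\<in>R. w r * (real (card {v\<in>snd r. c = fst r \<or> (c, fst r) \<in> P v}) / real (card V)))"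
proof -
  define n where "n = card V"
  have finV: "finite V" and Vne: "V \<noteq> {}" and finC: "finite C" using el by (auto simp: election_def)
  have npos: "0 < real n" using finV Vne by (simp add: n_def card_gt_0_iff)
  define Mx where "Mx r c = real (card {v\<in>snd r. c = fst r \<or> (c, fst r) \<in> P v}) / real n" for r c
  have finR: "finite R"
  proof -
    have "R \<subseteq> C \<times> Pow V" unfolding R_def by auto
    then show ?thesis by (rule finite_subset) (simp add: finC finV)
  qed
  define ind where "ind (r :: nat \<times> nat set) v = (if v \<in> snd r then 1 else 0 :: real)" for r v
  have pair: "Mx r1 (fst r2) + Mx r2 (fst r1) \<ge> (\<Sum>v\<in>V. ind r1 v * ind r2 v) / real n"
    if r1: "r1 \<in> R" and r2: "r2 \<in> R" for r1 r2
  proof -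
    obtain a1 B1 where e1: "r1 = (a1, B1)" "a1 \<in> C" "B1 \<subseteq> V" using r1 unfolding R_def by auto
    obtain a2 B2 where e2: "r2 = (a2, B2)" "a2 \<in> C" "B2 \<subseteq> V" using r2 unfolding R_def by auto
    define X where "X = {v\<in>B1. a2 = a1 \<or> (a2, a1) \<in> P v}"
    define Y where "Y = {v\<in>B2. a1 = a2 \<or> (a1, a2) \<in> P v}"
    have "B1 \<inter> B2 \<subseteq> X \<union> Y"
    proof
      fix v assume v: "v \<in> B1 \<inter> B2"
      then have "v \<in> V" using e1 by auto
      then have "total_on C (P v)" using el_facts[OF el] by auto
      then show "v \<in> X \<union> Y" using v e1 e2 unfolding X_def Y_def total_on_def by auto
    qed
    moreover have "finite (X \<union> Y)" using finV e1 e2 unfolding X_def Y_def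
      by (auto intro: finite_subset)
    ultimately have "card (B1 \<inter> B2) \<le> card (X \<union> Y)" by (rule card_mono[rotated])
    then have "card (B1 \<inter> B2) \<le> card X + card Y" using card_Un_le[of X Y] by linarith
    moreover have "(\<Sum>v\<in>V. ind r1 v * ind r2 v) = real (card (B1 \<inter> B2))"
    proof -
      have "(\<Sum>v\<in>V. ind r1 v * ind r2 v) = (\<Sum>v\<in>V. (if v \<in> B1 \<inter> B2 then 1 else 0 :: real))"
        unfolding ind_def e1 e2 by (intro sum.cong) auto
      also have "\<dots> = real (card (B1 \<inter> B2))" using finV e1 by (intro sum_ind_card) auto
      finally show ?thesis .
    qed
    moreover have "Mx r1 (fst r2) + Mx r2 (fst r1) = (real (card X) + real (card Y)) / real n"
      unfolding Mx_def e1 e2 X_def Y_def by (simp add: add_divide_distrib)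
    ultimately show ?thesis using npos
      by (metis divide_right_mono less_imp_le of_nat_add of_nat_le_iff)
  qed
  define pi where "pi v = (\<Sum>r\<in>R. w r * ind r v)" for v
  define D where "D = (\<Sum>r2\<in>R. w r2 * (\<Sum>r1\<in>R. w r1 * Mx r1 (fst r2)))"
  have D1: "D = (\<Sum>r2\<in>R. \<Sum>r1\<in>R. w r2 * w r1 * Mx r1 (fst r2))"
    unfolding D_def by (simp add: sum_distrib_left mult.assoc)
  have D2: "D = (\<Sum>r2\<in>R. \<Sum>r1\<in>R. w r2 * w r1 * Mx r2 (fst r1))"
    unfolding D1 by (rule trans[OF sum.swap]) (simp add: mult.commute)
  have "2 * D = (\<Sum>r2\<in>R. \<Sum>r1\<in>R. w r2 * w r1 * Mx r1 (fst r2)) + (\<Sum>r2\<in>R. \<Sum>r1\<in>R. w r2 * w r1 * Mx r2 (fst r1))"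
    using D1 D2 by simp
  also have "\<dots> = (\<Sum>r2\<in>R. \<Sum>r1\<in>R. w r2 * w r1 * (Mx r1 (fst r2) + Mx r2 (fst r1)))"
    by (simp only: distrib_left sum.distrib)
  also have "\<dots> \<ge> (\<Sum>r2\<in>R. \<Sum>r1\<in>R. w r2 * w r1 * ((\<Sum>v\<in>V. ind r1 v * ind r2 v) / real n))"
    using pair w0 by (intro sum_mono mult_left_mono) auto
  finally have D3: "2 * D \<ge> (\<Sum>r2\<in>R. \<Sum>r1\<in>R. w r2 * w r1 * ((\<Sum>v\<in>V. ind r1 v * ind r2 v) / real n))" .
  have "(\<Sum>r2\<in>R. \<Sum>r1\<in>R. w r2 * w r1 * ((\<Sum>v\<in>V. ind r1 v * ind r2 v) / real n))
        = (\<Sum>v\<in>V. pi v ^ 2) / real n"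
  proof -
    have sw: "(\<Sum>r2\<in>R. \<Sum>r1\<in>R. \<Sum>v\<in>V. (w r2 * ind r2 v) * (w r1 * ind r1 v))
        = (\<Sum>v\<in>V. \<Sum>r2\<in>R. \<Sum>r1\<in>R. (w r2 * ind r2 v) * (w r1 * ind r1 v))"
    proof -
      have "(\<Sum>r2\<in>R. \<Sum>r1\<in>R. \<Sum>v\<in>V. (w r2 * ind r2 v) * (w r1 * ind r1 v))
        = (\<Sum>r2\<in>R. \<Sum>v\<in>V. \<Sum>r1\<in>R. (w r2 * ind r2 v) * (w r1 * ind r1 v))"
        by (rule sum.cong[OF refl], rule sum.swap)
      also have "\<dots> = (\<Sum>v\<in>V. \<Sum>r2\<in>R. \<Sum>r1\<in>R. (w r2 * ind r2 v) * (w r1 * ind r1 v))"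
        by (rule sum.swap)
      finally show ?thesis .
    qed
    have "(\<Sum>r2\<in>R. \<Sum>r1\<in>R. w r2 * w r1 * ((\<Sum>v\<in>V. ind r1 v * ind r2 v) / real n))
        = (\<Sum>r2\<in>R. \<Sum>r1\<in>R. (\<Sum>v\<in>V. (w r2 * ind r2 v) * (w r1 * ind r1 v)) / real n)"
      by (intro sum.cong refl) (simp add: sum_distrib_left mult_ac)
    also have "\<dots> = (\<Sum>r2\<in>R. \<Sum>r1\<in>R. \<Sum>v\<in>V. (w r2 * ind r2 v) * (w r1 * ind r1 v)) / real n"
      by (simp only: sum_divide_distrib)
    also have "\<dots> = (\<Sum>v\<in>V. \<Sum>r2\<in>R. \<Sum>r1\<in>R. (w r2 * ind r2 v) * (w r1 * ind r1 v)) / real n"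
      by (simp only: sw)
    also have "\<dots> = (\<Sum>v\<in>V. pi v ^ 2) / real n"
      unfolding pi_def power2_eq_square by (simp add: sum_product)
    finally show ?thesis .
  qed
  moreover have "(\<Sum>v\<in>V. pi v) = real j"
  proof -
    have "(\<Sum>v\<in>V. pi v) = (\<Sum>r\<in>R. \<Sum>v\<in>V. w r * ind r v)"
      unfolding pi_def by (rule sum.swap)
    also have "\<dots> = (\<Sum>r\<in>R. w r * (\<Sum>v\<in>V. ind r v))"
      by (simp add: sum_distrib_left)
    also have "\<dots> = (\<Sum>r\<in>R. w r * real j)"
    proof (intro sum.cong refl)
      fix r assume "r \<in> R"
      then have "snd r \<subseteq> V" "card (snd r) = j" unfolding R_def by auto
      then show "w r * (\<Sum>v\<in>V. ind r v) = w r * real j"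
        unfolding ind_def using sum_ind_card[OF finV] by simp
    qed
    also have "\<dots> = real j" using w1 by (simp add: sum_distrib_right[symmetric])
    finally show ?thesis .
  qed
  moreover have "(\<Sum>v\<in>V. pi v) ^ 2 \<le> (\<Sum>v\<in>V. pi v ^ 2) * real n"
    using Cauchy_Schwarz_ineq_sum[of pi "\<lambda>_. 1" V] by (simp add: n_def)
  ultimately have "real j ^ 2 / (2 * real n ^ 2) \<le> D"
  proof -
    assume A1: "(\<Sum>r2\<in>R. \<Sum>r1\<in>R. w r2 * w r1 * ((\<Sum>v\<in>V. ind r1 v * ind r2 v) / real n)) = (\<Sum>v\<in>V. pi v ^ 2) / real n"
      and A2: "(\<Sum>v\<in>V. pi v) = real j" and A3: "(\<Sum>v\<in>V. pi v) ^ 2 \<le> (\<Sum>v\<in>V. pi v ^ 2) * real n"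
    have "real j ^ 2 / real n \<le> (\<Sum>v\<in>V. pi v ^ 2)" using A2 A3 npos by (simp add: divide_simps)
    then have "real j ^ 2 / real n / real n \<le> (\<Sum>v\<in>V. pi v ^ 2) / real n"
      using npos by (intro divide_right_mono) auto
    then have "real j ^ 2 / real n / real n \<le> 2 * D" using D3 A1 by linarith
    then show ?thesis by (simp add: power2_eq_square field_simps)
  qed
  then have Dge: "real j ^ 2 / (2 * real n ^ 2) \<le> D" .
  show ?thesis
  proof (rule ccontr)
    assume neg: "\<not> ?thesis"
    have lt: "(\<Sum>r1\<in>R. w r1 * Mx r1 (fst r)) < real j ^ 2 / (2 * real n ^ 2)" if "r \<in> R" for r
    proof -
      have "fst r \<in> C" using that unfolding R_def by auto
      then show ?thesis
        using neg unfolding Mx_def n_def by (auto simp: not_le)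
    qed
    obtain r0 where r0: "r0 \<in> R" "w r0 > 0"
    proof (rule ccontr)
      assume "\<not> thesis"
      then have "\<And>r. r \<in> R \<Longrightarrow> w r = 0" using w0 that by force
      then show False using w1 by simp
    qed
    have "D < (\<Sum>r2\<in>R. w r2 * (real j ^ 2 / (2 * real n ^ 2)))"
      unfolding D_def
    proof (rule sum_strict_mono_ex1[OF finR])
      show "\<forall>x\<in>R. w x * (\<Sum>r1\<in>R. w r1 * Mx r1 (fst x)) \<le> w x * (real j ^ 2 / (2 * real n ^ 2))"
        using mult_left_mono[OF less_imp_le[OF lt] w0] by blast
      show "\<exists>a\<in>R. w a * (\<Sum>r1\<in>R. w r1 * Mx r1 (fst a)) < w a * (real j ^ 2 / (2 * real n ^ 2))"
        using r0 lt by (intro bexI[of _ r0] mult_strict_left_mono) auto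
    qed
    also have "\<dots> = real j ^ 2 / (2 * real n ^ 2)" using w1 by (simp only: sum_distrib_right[symmetric])
    finally show False using Dge by simp
  qed
qed



lemma card_filter_sum:
  assumes "finite A"
  shows "card {x\<in>A. Q x} = (\<Sum>x\<in>A. if Q x then 1 else 0 :: nat)"
proof -
  have "(\<Sum>x\<in>A. if Q x then 1 else 0 :: nat) = (\<Sum>x\<in>A \<inter> {x. Q x}. 1)"
    using assms by (simp add: sum.If_cases)
  also have "A \<inter> {x. Q x} = {x\<in>A. Q x}" by auto
  finally show ?thesis by simp
qed

lemma card_swap:
  assumes "finite A" "finite B"
  shows "(\<Sum>a\<in>A. card {b\<in>B. Q a b}) = (\<Sum>b\<in>B. card {a\<in>A. Q a b})"
proof -
  have "(\<Sum>a\<in>A. card {b\<in>B. Q a b}) = (\<Sum>a\<in>A. \<Sum>b\<in>B. if Q a b then 1 else 0 :: nat)"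
    using assms by (simp add: card_filter_sum)
  also have "\<dots> = (\<Sum>b\<in>B. \<Sum>a\<in>A. if Q a b then 1 else 0 :: nat)" by (rule sum.swap)
  also have "\<dots> = (\<Sum>b\<in>B. card {a\<in>A. Q a b})"
    using assms by (simp add: card_filter_sum)
  finally show ?thesis .
qed

lemma list_sum_nth: "sum_list (map f cs) = (\<Sum>i<length cs. f (cs ! i))"
  by (simp add: sum_list_sum_nth lessThan_atLeast0)





lemma lemP:
  assumes el: "election V C P" and Cne: "C \<noteq> {}" and j: "j \<le> card V" and eps: "0 < \<epsilon>"
  shows "\<exists>T0. \<forall>T\<ge>T0. \<exists>cs. length cs = T \<and> set cs \<subseteq> C \<and> (\<forall>a\<in>C. \<forall>B. B \<subseteq> V \<and> card B = j \<longrightarrow>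
       real T * real (card V) * (real j^2/(2*real (card V)^2) - \<epsilon>) \<le> real (\<Sum>v\<in>B. card {i\<in>{..<T}. cs!i = a \<or> (cs!i, a) \<in> P v}))"
proof -
  define n where "n = card V"
  have finV: "finite V" and Vne: "V \<noteq> {}" and finC: "finite C" using el by (auto simp: election_def)
  have npos: "0 < real n" using finV Vne by (simp add: n_def card_gt_0_iff)
  define R where "R = {(a,B). a \<in> C \<and> B \<subseteq> V \<and> card B = j}"
  have finR: "finite R"
  proof -
    have "R \<subseteq> C \<times> Pow V" unfolding R_def by auto
    then show ?thesis by (rule finite_subset) (simp add: finC finV)
  qed
  obtain a0 where a0: "a0 \<in> C" using Cne by auto
  obtain B0 where B0: "B0 \<subseteq> V" "card B0 = j" using obtain_subset_with_card_n[OF j] by auto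
  have Rne: "R \<noteq> {}" using a0 B0 unfolding R_def by auto
  define M where "M r c = real (card {v\<in>snd r. c = fst r \<or> (c, fst r) \<in> P v}) / real n" for r :: "nat \<times> nat set" and c
  have bnd: "0 \<le> M r c \<and> M r c \<le> 1" if "r \<in> R" "c \<in> C" for r c
  proof -
    have "card {v\<in>snd r. c = fst r \<or> (c, fst r) \<in> P v} \<le> card V"
      using that finV unfolding R_def by (auto intro!: card_mono)
    then show ?thesis unfolding M_def n_def using npos n_def by (auto simp: divide_simps)
  qed
  define v0 where "v0 = real j^2/(2*real n^2)"
  have v0: "0 \<le> v0" "v0 \<le> 1"
  proof -
    show "0 \<le> v0" unfolding v0_def by simp
    have "real j ^ 2 \<le> real n ^ 2" using j unfolding n_def by (simp add: power_mono)
    then have h: "real j ^ 2 \<le> 1 * (2 * real n ^ 2)" using zero_le_power2[of "real n"] by linarith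
    have "0 < 2 * real n ^ 2" using npos by simp
    then show "v0 \<le> 1" unfolding v0_def using h by (subst pos_divide_le_eq) auto
  qed
  have br: "\<exists>c\<in>C. v0 \<le> (\<Sum>r\<in>R. w r * M r c)" if "\<And>r. r \<in> R \<Longrightarrow> 0 \<le> w r" "sum w R = 1" for w
    using best_resp[OF el R_def that] unfolding M_def v0_def n_def by simp
  define \<eta> where "\<eta> = \<epsilon> / 2"
  have eta: "0 < \<eta>" using eps by (simp add: \<eta>_def)
  define T0 where "T0 = nat \<lceil>ln (real (card R)) / \<eta>^2\<rceil>"
  show ?thesis
  proof (intro exI[of _ T0] allI impI)
    fix T assume T: "T0 \<le> T"
    obtain cs where cs: "length cs = T" "set cs \<subseteq> C"
      "\<forall>r\<in>R. real T * v0 * (1 - exp (- \<eta>)) - ln (card R) \<le> \<eta> * sum_list (map (M r) cs)"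
      using mw[OF finR Rne bnd br v0 eta, of T] by blast
    have lnR: "0 \<le> ln (real (card R))" using finR Rne by (simp add: Suc_le_eq card_gt_0_iff)
    have Tb: "ln (real (card R)) / \<eta>^2 \<le> real T"
      using T unfolding T0_def by linarith
    have kap: "\<eta> / (1 + \<eta>) \<le> 1 - exp (- \<eta>)"
    proof -
      have "1 + \<eta> \<le> exp \<eta>" by (rule exp_ge_add_one_self)
      then have "exp (- \<eta>) \<le> 1 / (1 + \<eta>)" using eta by (simp add: exp_minus divide_simps)
      then show ?thesis using eta by (simp add: divide_simps algebra_simps)
    qed
    show "\<exists>cs. length cs = T \<and> set cs \<subseteq> C \<and> (\<forall>a\<in>C. \<forall>B. B \<subseteq> V \<and> card B = j \<longrightarrow>
       real T * real (card V) * (real j^2/(2*real (card V)^2) - \<epsilon>) \<le> real (\<Sum>v\<in>B. card {i\<in>{..<T}. cs!i = a \<or> (cs!i, a) \<in> P v}))"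
    proof (intro exI[of _ cs] conjI cs(1) cs(2) ballI allI impI)
      fix a B assume a: "a \<in> C" and B: "B \<subseteq> V \<and> card B = j"
      have r: "(a, B) \<in> R" using a B unfolding R_def by auto
      have finB: "finite B" using B finV by (auto intro: finite_subset)
      have sl: "sum_list (map (M (a, B)) cs) = real (\<Sum>v\<in>B. card {i\<in>{..<T}. cs!i = a \<or> (cs!i, a) \<in> P v}) / real n"
      proof -
        have "sum_list (map (M (a, B)) cs) = (\<Sum>i<T. M (a, B) (cs ! i))" using cs(1) by (simp add: list_sum_nth)
        also have "\<dots> = real (\<Sum>i<T. card {v\<in>B. cs ! i = a \<or> (cs ! i, a) \<in> P v}) / real n"
          unfolding M_def by (simp add: sum_divide_distrib)
        also have "(\<Sum>i<T. card {v\<in>B. cs ! i = a \<or> (cs ! i, a) \<in> P v}) = (\<Sum>v\<in>B. card {i\<in>{..<T}. cs!i = a \<or> (cs!i, a) \<in> P v})"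
          using finB by (intro card_swap) auto
        finally show ?thesis .
      qed
      have main: "real T * v0 * (1 - exp (- \<eta>)) - ln (card R) \<le> \<eta> * sum_list (map (M (a, B)) cs)"
        using cs(3) r by blast
      have "real T * v0 * (\<eta> / (1 + \<eta>)) \<le> real T * v0 * (1 - exp (- \<eta>))"
        using kap v0 by (intro mult_left_mono) auto
      moreover have "real T * (v0 - \<eta>) * \<eta> \<le> real T * v0 * (\<eta> / (1 + \<eta>))"
      proof -
        have "(v0 - \<eta>) * (1 + \<eta>) \<le> v0" using mult_nonneg_nonpos[of \<eta> "v0 - 1 - \<eta>"] v0 eta by (simp add: algebra_simps)
        then have "(v0 - \<eta>) \<le> v0 / (1 + \<eta>)" using eta by (simp add: divide_simps)
        then have "real T * (v0 - \<eta>) * \<eta> \<le> real T * (v0 / (1 + \<eta>)) * \<eta>"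
          using eta by (intro mult_right_mono mult_left_mono) auto
        then show ?thesis by (simp add: field_simps)
      qed
      moreover have "real T * \<eta> * \<eta> \<ge> ln (card R)"
        using Tb eta by (simp add: divide_simps power2_eq_square mult.assoc)
      ultimately have "real T * (v0 - \<epsilon>) * \<eta> \<le> \<eta> * sum_list (map (M (a, B)) cs)"
        using main unfolding \<eta>_def by (simp add: algebra_simps)
      then have "real T * (v0 - \<epsilon>) \<le> sum_list (map (M (a, B)) cs)"
        using eta by (simp add: mult.commute)
      then have "real T * (v0 - \<epsilon>) * real n \<le> real (\<Sum>v\<in>B. card {i\<in>{..<T}. cs!i = a \<or> (cs!i, a) \<in> P v})"
        unfolding sl using npos by (simp add: divide_simps)
      then show "real T * real (card V) * (real j^2/(2*real (card V)^2) - \<epsilon>) \<le> real (\<Sum>v\<in>B. card {i\<in>{..<T}. cs!i = a \<or> (cs!i, a) \<in> P v})"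
        unfolding v0_def n_def by (simp add: algebra_simps)
    qed
  qed
qed



definition Aq :: "(nat \<Rightarrow> (nat \<times> nat) set) \<Rightarrow> nat list \<Rightarrow> nat \<Rightarrow> nat \<Rightarrow> nat" where
  "Aq P cs v i = card {i'\<in>{..<length cs}. (cs!i', cs!i) \<in> P v}"

lemma Aq_le: "Aq P cs v i \<le> length cs"
  unfolding Aq_def by (rule order_trans[OF card_mono[of "{..<length cs}"]]) auto

lemma top_count:
  assumes el: "election V C P" and v: "v \<in> V" and csC: "set cs \<subseteq> C"
  shows "card {i\<in>{..<length cs}. s \<le> Aq P cs v i} \<le> length cs - s"
proof (cases "{i\<in>{..<length cs}. s \<le> Aq P cs v i} = {}")
  case True then show ?thesis by (simp only: True) simp
next
  case False
  define T where "T = length cs"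
  define X where "X = {i\<in>{..<T}. s \<le> Aq P cs v i}"
  have finX: "finite X" unfolding X_def by auto
  have Xne: "X \<noteq> {}" using False unfolding X_def T_def by simp
  define m where "m = Min (Aq P cs v ` X)"
  have "m \<in> Aq P cs v ` X" unfolding m_def using finX Xne by (intro Min_in) auto
  then obtain i0 where i0: "i0 \<in> X" "Aq P cs v i0 = m" by auto
  have mmin: "m \<le> Aq P cs v i" if "i \<in> X" for i unfolding m_def using finX that by auto
  define U where "U = {i'\<in>{..<T}. (cs!i', cs!i0) \<in> P v}"
  have cardU: "card U = Aq P cs v i0" unfolding U_def Aq_def T_def by simp
  have tr: "trans (P v)" and irr: "\<And>x. (x,x) \<notin> P v" using el_facts[OF el v] by auto
  have disj: "X \<inter> U = {}"
  proof (rule ccontr)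
    assume "X \<inter> U \<noteq> {}"
    then obtain i' where i': "i' \<in> X" "i' \<in> U" by auto
    have sub: "{i''\<in>{..<T}. (cs!i'', cs!i') \<in> P v} \<subseteq> U"
      using i'(2) tr unfolding U_def by (auto elim: transE)
    have notin: "i' \<notin> {i''\<in>{..<T}. (cs!i'', cs!i') \<in> P v}" using irr by auto
    have "card {i''\<in>{..<T}. (cs!i'', cs!i') \<in> P v} < card U"
      using sub notin i'(2) by (intro psubset_card_mono) (auto simp: U_def)
    moreover have "Aq P cs v i' = card {i''\<in>{..<T}. (cs!i'', cs!i') \<in> P v}" unfolding Aq_def T_def by simp
    ultimately have "Aq P cs v i' < Aq P cs v i0" using cardU by linarith
    with mmin[OF i'(1)] i0 show False by simp
  qed
  have "X \<subseteq> {..<T} - U" using disj unfolding X_def by auto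
  then have "card X \<le> card ({..<T} - U)" by (intro card_mono) auto
  also have "\<dots> = T - card U" by (subst card_Diff_subset) (auto simp: U_def)
  also have "\<dots> \<le> T - s" using i0 cardU unfolding X_def by auto
  finally show ?thesis unfolding X_def T_def .
qed

definition Fs :: "nat \<Rightarrow> nat \<Rightarrow> (nat \<Rightarrow> nat) set" where
  "Fs d T = PiE {..<d} (\<lambda>_. {..<T})"

definition Nq :: "(nat \<Rightarrow> (nat \<times> nat) set) \<Rightarrow> nat list \<Rightarrow> nat \<Rightarrow> nat \<Rightarrow> (nat \<Rightarrow> nat) \<Rightarrow> nat" where
  "Nq P cs d v f = Min ((\<lambda>l. Aq P cs v (f l)) ` {..<d})"

lemma Nq_ge_iff:
  assumes "d \<ge> 1"
  shows "s \<le> Nq P cs d v f \<longleftrightarrow> (\<forall>l<d. s \<le> Aq P cs v (f l))"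
  unfolding Nq_def using assms by (subst Min_ge_iff) (auto simp: lessThan_empty_iff)

lemma Nq_le: "d \<ge> 1 \<Longrightarrow> Nq P cs d v f \<le> length cs"
  unfolding Nq_def by (rule order_trans[OF Min_le[where x="Aq P cs v (f 0)"]]) (auto simp: Aq_le)

lemma card_Fs: "card (Fs d T) = T ^ d"
  unfolding Fs_def by (simp add: card_PiE)

lemma fin_Fs: "finite (Fs d T)"
  unfolding Fs_def by (simp add: finite_PiE)

lemma count_F:
  assumes el: "election V C P" and v: "v \<in> V" and csC: "set cs \<subseteq> C" and d: "d \<ge> 1"
  shows "card {f\<in>Fs d (length cs). s \<le> Nq P cs d v f} \<le> (length cs - s) ^ d"
proof -
  define T where "T = length cs"
  have "{f\<in>Fs d T. s \<le> Nq P cs d v f} = PiE {..<d} (\<lambda>_. {i\<in>{..<T}. s \<le> Aq P cs v i})"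
  proof (intro equalityI subsetI)
    fix f assume "f \<in> {f\<in>Fs d T. s \<le> Nq P cs d v f}"
    then have f: "f \<in> PiE {..<d} (\<lambda>_. {..<T})" "\<forall>l<d. s \<le> Aq P cs v (f l)"
      unfolding Fs_def Nq_ge_iff[OF d] by auto
    then show "f \<in> PiE {..<d} (\<lambda>_. {i\<in>{..<T}. s \<le> Aq P cs v i})"
      by (simp add: PiE_iff)
  next
    fix f assume f: "f \<in> PiE {..<d} (\<lambda>_. {i\<in>{..<T}. s \<le> Aq P cs v i})"
    then have "f \<in> Fs d T" unfolding Fs_def by (simp add: PiE_iff)
    moreover have "s \<le> Nq P cs d v f" unfolding Nq_ge_iff[OF d] using f by (simp add: PiE_iff)
    ultimately show "f \<in> {f\<in>Fs d T. s \<le> Nq P cs d v f}" by simp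
  qed
  then have "card {f\<in>Fs d T. s \<le> Nq P cs d v f} = card {i\<in>{..<T}. s \<le> Aq P cs v i} ^ d"
    by (simp add: card_PiE)
  also have "\<dots> \<le> (T - s) ^ d" using top_count[OF el v csC, of s] unfolding T_def by (intro power_mono) auto
  finally show ?thesis unfolding T_def .
qed

lemma averaging:
  fixes g :: "'a \<Rightarrow> real"
  assumes "finite F" "F \<noteq> {}" "sum g F \<le> X"
  shows "\<exists>f\<in>F. g f * real (card F) \<le> X"
proof (rule ccontr)
  assume "\<not> ?thesis"
  then have lt: "\<And>f. f \<in> F \<Longrightarrow> X < g f * real (card F)" by (auto simp: not_le)
  have "(\<Sum>f\<in>F. X) < (\<Sum>f\<in>F. g f * real (card F))"
    by (rule sum_strict_mono[OF assms(1) assms(2)]) (rule lt)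
  then have "real (card F) * X < real (card F) * sum g F" by (simp add: sum_distrib_right mult.commute)
  then have "X < sum g F" using assms by (simp add: card_gt_0_iff)
  then show False using assms by simp
qed

lemma bern_nat: "(m::nat) ^ (k+1) + (k+1) * m ^ k \<le> (m+1) ^ (k+1)"
proof (induction k)
  case 0 then show ?case by simp
next
  case (Suc k)
  have "(m+1) ^ (Suc k + 1) = (m+1) * (m+1)^(k+1)" by simp
  also have "\<dots> \<ge> (m+1) * (m ^ (k+1) + (k+1) * m ^ k)" using Suc by (intro mult_left_mono) auto
  finally have h: "(m+1) * (m ^ (k+1) + (k+1) * m ^ k) \<le> (m+1) ^ (Suc k + 1)" .
  have e1: "m ^ (Suc k + 1) + (Suc k + 1) * m ^ Suc k = m * (m * m^k) + (k+2) * (m * m^k)" by simp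
  have e2: "(m+1) * (m ^ (k+1) + (k+1) * m ^ k) = m * (m * m^k) + (k+2) * (m * m^k) + (k+1) * m^k"
    by (simp add: algebra_simps)
  have "m ^ (Suc k + 1) + (Suc k + 1) * m ^ Suc k \<le> (m+1) * (m ^ (k+1) + (k+1) * m ^ k)"
    unfolding e1 e2 by simp
  then show ?case using h by linarith
qed

lemma powsum:
  "real (\<Sum>s\<in>{s0..<T}. (T - Suc s) ^ k) \<le> real (T - s0) ^ (k+1) / real (k+1)"
proof (induction "T - s0" arbitrary: s0)
  case 0 then show ?case by simp
next
  case (Suc d)
  then have s0T: "s0 < T" by simp
  have split: "{s0..<T} = insert s0 {Suc s0..<T}" using s0T by auto
  have IH: "real (\<Sum>s\<in>{Suc s0..<T}. (T - Suc s) ^ k) \<le> real (T - Suc s0) ^ (k+1) / real (k+1)"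
    using Suc(1)[of "Suc s0"] Suc(2) by simp
  have eqd: "T - Suc s0 = d" "T - s0 = d + 1" using Suc(2) by auto
  have "real (\<Sum>s\<in>{s0..<T}. (T - Suc s) ^ k) = real (d ^ k) + real (\<Sum>s\<in>{Suc s0..<T}. (T - Suc s) ^ k)"
    unfolding split using eqd by simp
  also have "\<dots> \<le> real d ^ k + real d ^ (k+1) / real (k+1)" using IH eqd by simp
  also have "\<dots> \<le> real (d+1) ^ (k+1) / real (k+1)"
  proof -
    have "real (d ^ (k+1) + (k+1) * d ^ k) \<le> real ((d+1) ^ (k+1))" using bern_nat[of d k] by linarith
    moreover have "real (d ^ (k+1) + (k+1) * d ^ k) = real d ^ (k+1) + real (k+1) * real d ^ k" by (simp add: algebra_simps)
    moreover have "real ((d+1) ^ (k+1)) = real (d+1) ^ (k+1)" by (rule of_nat_power)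
    ultimately have "real (k+1) * real d ^ k + real d ^ (k+1) \<le> real (d+1) ^ (k+1)" by linarith
    then have "(real (k+1) * real d ^ k + real d ^ (k+1)) / real (k+1) \<le> real (d+1) ^ (k+1) / real (k+1)"
      by (intro divide_right_mono) auto
    moreover have "(real (k+1) * real d ^ k + real d ^ (k+1)) / real (k+1) = real d ^ k + real d ^ (k+1) / real (k+1)"
      by (simp add: add_divide_distrib)
    ultimately show ?thesis by simp
  qed
  finally show ?case using eqd by simp
qed



lemma sample2:
  assumes el: "election V C P" and csC: "set cs \<subseteq> C" and T: "length cs = T" "T \<ge> 1" and d: "d \<ge> 1"
  shows "\<exists>f\<in>Fs d T. real (card {v\<in>V. s0 \<le> Nq P cs d v f}) * real T ^ d \<le> real (card V) * real (T - s0) ^ d"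
proof -
  have finV: "finite V" using el by (auto simp: election_def)
  have "(\<Sum>f\<in>Fs d T. card {v\<in>V. s0 \<le> Nq P cs d v f}) = (\<Sum>v\<in>V. card {f\<in>Fs d T. s0 \<le> Nq P cs d v f})"
    using finV fin_Fs by (intro card_swap) auto
  also have "\<dots> \<le> (\<Sum>v\<in>V. (T - s0) ^ d)"
    using count_F[OF el _ csC d] T by (intro sum_mono) auto
  also have "\<dots> = card V * (T - s0) ^ d" by simp
  finally have "real (\<Sum>f\<in>Fs d T. card {v\<in>V. s0 \<le> Nq P cs d v f}) \<le> real (card V * (T - s0) ^ d)"
    by (simp only: of_nat_le_iff)
  then have "real (\<Sum>f\<in>Fs d T. card {v\<in>V. s0 \<le> Nq P cs d v f}) \<le> real (card V) * real (T - s0) ^ d"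
    by simp
  then have "(\<Sum>f\<in>Fs d T. real (card {v\<in>V. s0 \<le> Nq P cs d v f})) \<le> real (card V) * real (T - s0) ^ d"
    by simp
  moreover have "Fs d T \<noteq> {}"
  proof
    assume "Fs d T = {}"
    then have "card (Fs d T) = 0" by simp
    then show False using T(2) by (simp add: card_Fs)
  qed
  ultimately obtain f where "f \<in> Fs d T" "real (card {v\<in>V. s0 \<le> Nq P cs d v f}) * real (card (Fs d T)) \<le> real (card V) * real (T - s0) ^ d"
    using averaging[OF fin_Fs] by blast
  then show ?thesis by (auto simp: card_Fs)
qed

lemma layer:
  assumes "N \<le> T"
  shows "N - s0 = card {s\<in>{s0..<T}. Suc s \<le> N}"
proof -
  have "{s\<in>{s0..<T}. Suc s \<le> N} = {s0..<N}" using assms by auto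
  then show ?thesis by simp
qed

lemma sample1:
  assumes el: "election V C P" and csC: "set cs \<subseteq> C" and T: "length cs = T" "T \<ge> 1" and k: "k \<ge> 1"
  shows "\<exists>f\<in>Fs k T. real (\<Sum>v\<in>V. (Nq P cs k v f - s0)) * real T ^ k \<le> real (card V) * (real (T - s0) ^ (k+1) / real (k+1))"
proof -
  have finV: "finite V" using el by (auto simp: election_def)
  have one: "real (\<Sum>f\<in>Fs k T. (Nq P cs k v f - s0)) \<le> real (T - s0) ^ (k+1) / real (k+1)" if v: "v \<in> V" for v
  proof -
    have "(\<Sum>f\<in>Fs k T. (Nq P cs k v f - s0)) = (\<Sum>f\<in>Fs k T. card {s\<in>{s0..<T}. Suc s \<le> Nq P cs k v f})"
      using Nq_le[OF k] T by (intro sum.cong refl layer) auto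
    also have "\<dots> = (\<Sum>s\<in>{s0..<T}. card {f\<in>Fs k T. Suc s \<le> Nq P cs k v f})"
      using fin_Fs by (intro card_swap) auto
    also have "\<dots> \<le> (\<Sum>s\<in>{s0..<T}. (T - Suc s) ^ k)"
      using count_F[OF el v csC k] T by (intro sum_mono) auto
    finally have "real (\<Sum>f\<in>Fs k T. (Nq P cs k v f - s0)) \<le> real (\<Sum>s\<in>{s0..<T}. (T - Suc s) ^ k)"
      by (simp only: of_nat_le_iff)
    also have "\<dots> \<le> real (T - s0) ^ (k+1) / real (k+1)" by (rule powsum)
    finally show ?thesis .
  qed
  have "(\<Sum>f\<in>Fs k T. real (\<Sum>v\<in>V. (Nq P cs k v f - s0))) = (\<Sum>v\<in>V. real (\<Sum>f\<in>Fs k T. (Nq P cs k v f - s0)))"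
    by (simp only: of_nat_sum) (rule sum.swap)
  also have "\<dots> \<le> (\<Sum>v\<in>V. real (T - s0) ^ (k+1) / real (k+1))"
    using one by (intro sum_mono) auto
  also have "\<dots> = real (card V) * (real (T - s0) ^ (k+1) / real (k+1))" by simp
  finally have S: "(\<Sum>f\<in>Fs k T. real (\<Sum>v\<in>V. (Nq P cs k v f - s0))) \<le> real (card V) * (real (T - s0) ^ (k+1) / real (k+1))" .
  have "Fs k T \<noteq> {}"
  proof
    assume "Fs k T = {}"
    then have "card (Fs k T) = 0" by simp
    then show False using T(2) by (simp add: card_Fs)
  qed
  then obtain f where "f \<in> Fs k T" "real (\<Sum>v\<in>V. (Nq P cs k v f - s0)) * real (card (Fs k T)) \<le> real (card V) * (real (T - s0) ^ (k+1) / real (k+1))"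
    using averaging[OF fin_Fs _ S] by blast
  then show ?thesis by (auto simp: card_Fs)
qed

lemma bad_le:
  assumes el: "election V C P" and v: "v \<in> V" and csC: "set cs \<subseteq> C" and d: "d \<ge> 1"
    and f: "f \<in> Fs d (length cs)" and bad: "\<forall>l<d. (a, cs!(f l)) \<in> P v"
  shows "card {i\<in>{..<length cs}. cs!i = a \<or> (cs!i, a) \<in> P v} \<le> Nq P cs d v f"
  unfolding Nq_ge_iff[OF d]
proof (intro allI impI)
  fix l assume l: "l < d"
  have tr: "trans (P v)" using el_facts[OF el v] by auto
  have "{i\<in>{..<length cs}. cs!i = a \<or> (cs!i, a) \<in> P v} \<subseteq> {i'\<in>{..<length cs}. (cs!i', cs!(f l)) \<in> P v}"
    using bad l tr by (auto elim: transE)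
  then show "card {i\<in>{..<length cs}. cs!i = a \<or> (cs!i, a) \<in> P v} \<le> Aq P cs v (f l)"
    unfolding Aq_def by (intro card_mono) auto
qed

lemma committee:
  assumes csC: "set cs \<subseteq> C" and f: "f \<in> Fs d (length cs)"
  shows "(\<lambda>l. cs!(f l)) ` {..<d} \<subseteq> C" "card ((\<lambda>l. cs!(f l)) ` {..<d}) \<le> d"
proof -
  show "(\<lambda>l. cs!(f l)) ` {..<d} \<subseteq> C" using csC f unfolding Fs_def by (auto simp: PiE_iff)
  show "card ((\<lambda>l. cs!(f l)) ` {..<d}) \<le> d" using card_image_le[of "{..<d}" "\<lambda>l. cs!(f l)"] by simp
qed

lemma pad:
  assumes "finite C" "U \<subseteq> C" "card U \<le> k" "k \<le> card C"
  shows "\<exists>W. U \<subseteq> W \<and> W \<subseteq> C \<and> card W = k"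
proof -
  have finU: "finite U" using assms(1,2) by (rule finite_subset[rotated])
  have cd: "card (C - U) = card C - card U" using assms(2) finU by (rule card_Diff_subset[rotated])
  have "k - card U \<le> card (C - U)" unfolding cd using assms(4) by linarith
  then obtain W' where W': "W' \<subseteq> C - U" "card W' = k - card U" "finite W'"
    by (rule obtain_subset_with_card_n)
  have disj: "U \<inter> W' = {}" using W'(1) by blast
  have "card (U \<union> W') = card U + card W'" by (rule card_Un_disjoint[OF finU W'(3) disj])
  then have "card (U \<union> W') = k" using W'(2) assms(3) by linarith
  moreover have "U \<union> W' \<subseteq> C" using W'(1) assms(2) by blast
  ultimately show ?thesis by blast
qed





lemma final1:
  fixes \<alpha> \<beta> \<sigma> \<tau> \<delta> \<epsilon> :: real
  assumes a: "0 < \<alpha>" and tau: "0 \<le> \<tau>" and ex: "exp (- (real k + 1) * \<tau>) = \<alpha>"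
    and dl: "\<delta> = \<alpha>/2 - \<tau> - 1/(real k + 1)" "0 < \<delta>"
    and b: "\<alpha> \<le> \<beta>" and s: "\<tau> \<le> \<sigma>" "\<sigma> \<le> \<tau> + \<delta>/2" "\<sigma> \<le> 1" and e: "\<epsilon> = \<alpha> * \<delta> / 4"
  shows "\<beta> * \<sigma> + (1 - \<sigma>) ^ (k+1) / (real k + 1) < \<beta>^2/2 - \<epsilon>"
proof -
  have "(1 - \<sigma>) ^ (k+1) \<le> (1 - \<tau>) ^ (k+1)" using s by (intro power_mono) auto
  also have "\<dots> \<le> exp (- \<tau>) ^ (k+1)"
    using s by (intro power_mono) (auto simp: exp_ge_add_one_self[of "-\<tau>", simplified])
  also have "\<dots> = exp (real (k+1) * (- \<tau>))" by (rule exp_of_nat_mult[symmetric])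
  also have "\<dots> = exp (- (real k + 1) * \<tau>)" by (simp add: algebra_simps)
  finally have p: "(1 - \<sigma>) ^ (k+1) \<le> \<alpha>" using ex by simp
  have k1: "0 < real k + 1" by simp
  have p2: "(1 - \<sigma>) ^ (k+1) / (real k + 1) \<le> \<alpha> / (real k + 1)"
    using p k1 by (intro divide_right_mono) auto
  have q1: "\<alpha>/2 - \<sigma> \<ge> 1/(real k + 1) + \<delta>/2" using dl s by linarith
  have q0: "0 < 1/(real k + 1)" by simp
  have "\<beta> * (\<beta>/2 - \<sigma>) - \<alpha> * (\<alpha>/2 - \<sigma>) = (\<beta> - \<alpha>) * ((\<beta> + \<alpha>)/2 - \<sigma>)" by (simp add: field_simps)
  also have "\<dots> \<ge> 0"
  proof (intro mult_nonneg_nonneg)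
    show "0 \<le> \<beta> - \<alpha>" using b by simp
    have "0 < \<alpha>/2 - \<sigma>" using q1 q0 dl(2) by linarith
    then show "0 \<le> (\<beta> + \<alpha>)/2 - \<sigma>" using a b by argo
  qed
  finally have r1: "\<beta> * (\<beta>/2 - \<sigma>) \<ge> \<alpha> * (\<alpha>/2 - \<sigma>)" by simp
  have r2: "\<alpha> * (\<alpha>/2 - \<sigma>) \<ge> \<alpha> * (1/(real k + 1) + \<delta>/2)" using q1 a by (intro mult_left_mono) auto
  have "\<alpha> * (1/(real k + 1) + \<delta>/2) = \<alpha>/(real k + 1) + \<alpha> * \<delta> / 2" by (simp add: algebra_simps)
  moreover have "\<alpha> * \<delta> / 4 < \<alpha> * \<delta> / 2" using a dl by simp
  moreover have "\<beta> * (\<beta>/2 - \<sigma>) = \<beta>^2/2 - \<beta> * \<sigma>" by (simp add: power2_eq_square algebra_simps)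
  ultimately show ?thesis using r1 r2 p2 e by argo
qed


lemma ceil_bounds:
  fixes x :: real assumes "0 \<le> x"
  shows "x \<le> real (nat \<lceil>x\<rceil>)" "real (nat \<lceil>x\<rceil>) < x + 1"
proof -
  show "x \<le> real (nat \<lceil>x\<rceil>)" by (rule real_nat_ceiling_ge)
  have "0 \<le> \<lceil>x\<rceil>" using assms by simp
  then have "real (nat \<lceil>x\<rceil>) = real_of_int \<lceil>x\<rceil>" by simp
  then show "real (nat \<lceil>x\<rceil>) < x + 1" using ceiling_correct[of x] by linarith
qed

lemma main1:
  fixes \<alpha> :: real
  assumes k: "k \<ge> 1" and a0: "0 < \<alpha>" "\<alpha> < 1" and big: "2 / (real k + 1) * (1 - ln \<alpha>) < \<alpha>"
    and el: "election V C P" and kC: "k \<le> card C"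
  shows "\<exists>S. S \<subseteq> C \<and> card S = k \<and> undominated \<alpha> V C P S"
proof -
  define n where "n = card V"
  have finV: "finite V" and Vne: "V \<noteq> {}" and finC: "finite C" using el by (auto simp: election_def)
  have npos: "0 < real n" using finV Vne by (simp add: n_def card_gt_0_iff)
  have Cne: "C \<noteq> {}" using kC k by auto
  define \<tau> where "\<tau> = - ln \<alpha> / (real k + 1)"
  have lna: "ln \<alpha> < 0" using a0 by simp
  have tau0: "0 \<le> \<tau>" unfolding \<tau>_def using lna by (intro divide_nonneg_pos) auto
  have ex: "exp (- (real k + 1) * \<tau>) = \<alpha>"
  proof -
    have "- (real k + 1) * \<tau> = ln \<alpha>" unfolding \<tau>_def by (simp add: field_simps)
    then show ?thesis using a0 by simp
  qed
  define \<delta> where "\<delta> = \<alpha>/2 - \<tau> - 1/(real k + 1)"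
  have "2 / (real k + 1) * (1 - ln \<alpha>) = 2 * (1/(real k + 1)) + 2 * \<tau>"
  proof -
    define K where "K = real k + 1"
    have "K \<noteq> 0" unfolding K_def by simp
    then have "2 / K * (1 - ln \<alpha>) = 2 * (1/K) + 2 * (- ln \<alpha> / K)" by (simp add: field_simps)
    then show ?thesis unfolding K_def \<tau>_def .
  qed
  then have d0: "0 < \<delta>" using big unfolding \<delta>_def by argo
  have kinv: "0 < 1/(real k + 1)" by simp
  have tau1: "\<tau> < 1" using d0 a0 kinv unfolding \<delta>_def by argo
  define \<epsilon> where "\<epsilon> = \<alpha> * \<delta> / 4"
  have eps: "0 < \<epsilon>" using a0 d0 by (simp add: \<epsilon>_def)
  define j where "j = nat \<lceil>\<alpha> * real n\<rceil>"
  have an: "\<alpha> * real n \<le> 1 * real n" using a0 npos by (intro mult_right_mono) auto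
  have jn: "j \<le> card V" unfolding j_def n_def[symmetric] using an by simp
  have jge: "\<alpha> * real n \<le> real j" unfolding j_def by (rule real_nat_ceiling_ge)
  obtain T0 where T0: "\<forall>T\<ge>T0. \<exists>cs. length cs = T \<and> set cs \<subseteq> C \<and> (\<forall>a\<in>C. \<forall>B. B \<subseteq> V \<and> card B = j \<longrightarrow>
       real T * real (card V) * (real j^2/(2*real (card V)^2) - \<epsilon>) \<le> real (\<Sum>v\<in>B. card {i\<in>{..<T}. cs!i = a \<or> (cs!i, a) \<in> P v}))"
    using lemP[OF el Cne jn eps] by blast
  define T where "T = max T0 (nat \<lceil>2/\<delta>\<rceil> + 1)"
  have T1: "T \<ge> 1" unfolding T_def by simp
  have Tpos: "0 < real T" using T1 by simp
  have Td: "2/\<delta> \<le> real T"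
  proof -
    have "2/\<delta> \<le> real (nat \<lceil>2/\<delta>\<rceil>)" by (rule real_nat_ceiling_ge)
    also have "\<dots> \<le> real T"
    proof (rule of_nat_mono)
      have "nat \<lceil>2/\<delta>\<rceil> + 1 \<le> T" unfolding T_def by (rule max.cobounded2)
      then show "nat \<lceil>2/\<delta>\<rceil> \<le> T" by (rule le_trans[OF le_add1])
    qed
    finally show ?thesis .
  qed
  have invT: "1 / real T \<le> \<delta>/2" using Td d0 Tpos by (simp add: divide_simps mult.commute)
  obtain cs where cs: "length cs = T" "set cs \<subseteq> C" "\<forall>a\<in>C. \<forall>B. B \<subseteq> V \<and> card B = j \<longrightarrow>
       real T * real (card V) * (real j^2/(2*real (card V)^2) - \<epsilon>) \<le> real (\<Sum>v\<in>B. card {i\<in>{..<T}. cs!i = a \<or> (cs!i, a) \<in> P v})"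
  proof -
    have "T0 \<le> T" unfolding T_def by simp
    then show ?thesis using T0 that by blast
  qed
  define s0 where "s0 = nat \<lceil>\<tau> * real T\<rceil>"
  have s0a: "\<tau> * real T \<le> real s0" "real s0 < \<tau> * real T + 1"
    unfolding s0_def using ceil_bounds[of "\<tau> * real T"] tau0 Tpos by auto
  have s0T: "s0 \<le> T"
  proof -
    have "\<tau> * real T \<le> 1 * real T" using tau1 Tpos by (intro mult_right_mono) auto
    then show ?thesis unfolding s0_def by simp
  qed
  define \<sigma> where "\<sigma> = real s0 / real T"
  have sig: "\<tau> \<le> \<sigma>" "\<sigma> \<le> \<tau> + \<delta>/2" "\<sigma> \<le> 1"
  proof -
    show "\<tau> \<le> \<sigma>" unfolding \<sigma>_def using s0a Tpos by (simp add: divide_simps)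
    have "\<sigma> < \<tau> + 1 / real T" unfolding \<sigma>_def using s0a Tpos by (simp add: divide_simps)
    then show "\<sigma> \<le> \<tau> + \<delta>/2" using invT by linarith
    show "\<sigma> \<le> 1" unfolding \<sigma>_def using s0T Tpos by (simp add: divide_simps)
  qed
  obtain f where f: "f \<in> Fs k T"
    "real (\<Sum>v\<in>V. (Nq P cs k v f - s0)) * real T ^ k \<le> real (card V) * (real (T - s0) ^ (k+1) / real (k+1))"
    using sample1[OF el cs(2) cs(1) T1 k, of s0] by blast
  define U where "U = (\<lambda>l. cs!(f l)) ` {..<k}"
  have U: "U \<subseteq> C" "card U \<le> k" using committee[OF cs(2), of f k] f(1) cs(1) unfolding U_def by auto
  obtain W where W: "U \<subseteq> W" "W \<subseteq> C" "card W = k" using pad[OF finC U kC] by blast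
  have "undominated \<alpha> V C P W"
    unfolding undominated_def
  proof
    fix a assume a: "a \<in> C"
    define bad where "bad = {v\<in>V. \<forall>b\<in>W. (a, b) \<in> P v}"
    show "dom_frac V P a W < \<alpha>"
    proof (rule ccontr)
      assume "\<not> dom_frac V P a W < \<alpha>"
      then have "\<alpha> \<le> real (card bad) / real n" unfolding dom_frac_def bad_def n_def by simp
      then have "\<alpha> * real n \<le> real (card bad)" using npos by (simp add: divide_simps)
      then have "j \<le> card bad" unfolding j_def by simp
      then obtain B where B: "B \<subseteq> bad" "card B = j" by (meson obtain_subset_with_card_n)
      have BV: "B \<subseteq> V" using B unfolding bad_def by auto
      have finB: "finite B" using BV finV by (rule finite_subset)
      define Q where "Q v = card {i\<in>{..<T}. cs!i = a \<or> (cs!i, a) \<in> P v}" for v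
      have L: "real T * real n * (real j^2/(2*real n^2) - \<epsilon>) \<le> real (\<Sum>v\<in>B. Q v)"
        using cs(3) a BV B(2) unfolding Q_def n_def by blast
      have Qle: "Q v \<le> Nq P cs k v f" if v: "v \<in> B" for v
      proof -
        have vV: "v \<in> V" using v BV by auto
        have "\<forall>l<k. (a, cs!(f l)) \<in> P v"
        proof (intro allI impI)
          fix l assume "l < k"
          then have "cs!(f l) \<in> W" using W(1) unfolding U_def by auto
          then show "(a, cs!(f l)) \<in> P v" using v B(1) unfolding bad_def by auto
        qed
        then show ?thesis unfolding Q_def using bad_le[OF el vV cs(2) k, of f a] f(1) cs(1) by simp
      qed
      define NS where "NS = (\<Sum>v\<in>V. (Nq P cs k v f - s0))"
      have "(\<Sum>v\<in>B. Q v) \<le> (\<Sum>v\<in>B. (s0 + (Nq P cs k v f - s0)))"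
      proof (intro sum_mono)
        fix v assume "v \<in> B"
        then show "Q v \<le> s0 + (Nq P cs k v f - s0)" using Qle[of v] by linarith
      qed
      also have "\<dots> = card B * s0 + (\<Sum>v\<in>B. (Nq P cs k v f - s0))" by (simp add: sum.distrib)
      also have "(\<Sum>v\<in>B. (Nq P cs k v f - s0)) \<le> NS"
        unfolding NS_def using BV finV by (intro sum_mono2) auto
      finally have X: "(\<Sum>v\<in>B. Q v) \<le> j * s0 + NS" using B(2) by simp
      then have "real (\<Sum>v\<in>B. Q v) \<le> real (j * s0 + NS)"
        by (simp only: of_nat_le_iff)
      then have "real (\<Sum>v\<in>B. Q v) \<le> real j * real s0 + real NS" by simp
      with L have L2: "real T * real n * (real j^2/(2*real n^2) - \<epsilon>) \<le> real j * real s0 + real NS" by linarith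
      define \<beta> where "\<beta> = real j / real n"
      have b: "\<alpha> \<le> \<beta>" unfolding \<beta>_def using jge npos by (simp add: divide_simps)
      have "\<beta>^2/2 - \<epsilon> \<le> (real j * real s0 + real NS) / (real T * real n)"
        using L2 Tpos npos unfolding \<beta>_def by (simp add: pos_le_divide_eq power_divide mult.commute)
      also have "\<dots> = \<beta> * \<sigma> + real NS / (real T * real n)"
        unfolding \<beta>_def \<sigma>_def using Tpos npos by (simp add: field_simps)
      also have "real NS / (real T * real n) \<le> (1 - \<sigma>) ^ (k+1) / (real k + 1)"
      proof -
        have NSb: "real NS * real T ^ k \<le> real n * (real (T - s0) ^ (k+1) / real (k+1))"
          using f(2) unfolding NS_def n_def .
        have e1: "real (T - s0) = real T * (1 - \<sigma>)" unfolding \<sigma>_def using s0T Tpos by (simp add: field_simps)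
        have "real NS * real T ^ k \<le> real n * (real T ^ (k+1) * (1 - \<sigma>) ^ (k+1) / real (k+1))"
          using NSb unfolding e1 by (simp add: power_mult_distrib mult_ac)
        then have "real NS * real T ^ k \<le> ((real T * real n) * ((1 - \<sigma>) ^ (k+1) / (real k + 1))) * real T ^ k"
          by (simp add: algebra_simps)
        moreover have "0 < real T ^ k" using Tpos by simp
        ultimately have "real NS \<le> (real T * real n) * ((1 - \<sigma>) ^ (k+1) / (real k + 1))"
          by (rule mult_right_le_imp_le)
        then show ?thesis using Tpos npos by (simp add: pos_divide_le_eq mult.commute)
      qed
      finally have "\<beta>^2/2 - \<epsilon> \<le> \<beta> * \<sigma> + (1 - \<sigma>) ^ (k+1) / (real k + 1)" by simp
      moreover have "\<beta> * \<sigma> + (1 - \<sigma>) ^ (k+1) / (real k + 1) < \<beta>^2/2 - \<epsilon>"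
        by (rule final1[OF a0(1) tau0 ex \<delta>_def d0 b sig \<epsilon>_def])
      ultimately show False by simp
    qed
  qed
  then show ?thesis using W by blast
qed



lemma final2:
  fixes \<beta> \<sigma> \<tau> \<tau>' \<rho> \<epsilon> :: real
  assumes r: "0 < \<rho>" and t: "\<tau>' = \<tau> + \<rho>" "0 \<le> \<tau>" and b: "2 * \<tau>' \<le> \<beta>"
    and s: "\<sigma> \<le> \<tau> + \<rho>/2" and e: "\<epsilon> = \<tau>' * \<rho> / 2"
  shows "\<beta> * \<sigma> < \<beta>^2/2 - \<epsilon>"
proof -
  have h1: "\<rho>/2 \<le> \<beta>/2 - \<sigma>" using t b s by linarith
  have tp: "0 < \<tau>'" using t r by linarith
  have b0: "0 \<le> \<beta>" using tp b by linarith
  have m1: "\<beta> * (\<rho>/2) \<le> \<beta> * (\<beta>/2 - \<sigma>)" using h1 b0 by (rule mult_left_mono)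
  have m2: "(2 * \<tau>') * (\<rho>/2) \<le> \<beta> * (\<rho>/2)" using b r by (intro mult_right_mono) auto
  have m3: "(2 * \<tau>') * (\<rho>/2) = \<tau>' * \<rho>" by simp
  have m4: "0 < \<tau>' * \<rho>" using tp r by simp
  have m5: "\<beta> * (\<beta>/2 - \<sigma>) = \<beta>^2/2 - \<beta> * \<sigma>" by (simp add: power2_eq_square algebra_simps)
  show ?thesis using m1 m2 m3 m4 m5 e by linarith
qed

lemma exp_tau:
  assumes "1 \<le> k'" "k' < k"
  shows "exp (- (real k - real k') * (2 * ln (real k / real k') / (real k - real k'))) = (real k' / real k)^2"
proof -
  have pos: "0 < real k'" "0 < real k" "0 < real k - real k'" using assms by auto
  have "- (real k - real k') * (2 * ln (real k / real k') / (real k - real k')) = real 2 * ln (real k' / real k)"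
    using pos by (simp add: ln_div field_simps)
  then have "exp (- (real k - real k') * (2 * ln (real k / real k') / (real k - real k'))) = exp (ln (real k' / real k)) ^ 2"
    by (simp only: exp_of_nat_mult)
  also have "\<dots> = (real k' / real k)^2" using pos by simp
  finally show ?thesis .
qed

lemma main2:
  fixes \<alpha>' \<gamma> :: real
  assumes k': "1 \<le> k'" "k' < k" and a'0: "0 \<le> \<alpha>'"
    and H: "\<forall>V C P. election V C P \<and> k' \<le> card C \<longrightarrow> (\<exists>S. S \<subseteq> C \<and> card S = k' \<and> undominated \<alpha>' V C P S)"
    and g: "(real k'/real k)^2 * \<alpha>' + 2 * (2 * ln (real k / real k') / (real k - real k')) < \<gamma>"
    and el: "election V C P" and kC: "k \<le> card C"
  shows "\<exists>S. S \<subseteq> C \<and> card S = k \<and> undominated \<gamma> V C P S"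
proof -
  define n where "n = card V"
  have finV: "finite V" and Vne: "V \<noteq> {}" and finC: "finite C" using el by (auto simp: election_def)
  have npos: "0 < real n" using finV Vne by (simp add: n_def card_gt_0_iff)
  have Cne: "C \<noteq> {}" using kC k' by auto
  define d where "d = k - k'"
  have d1: "d \<ge> 1" using k' unfolding d_def by simp
  have rd: "real d = real k - real k'" using k' unfolding d_def by simp
  define \<tau> where "\<tau> = 2 * ln (real k / real k') / (real k - real k')"
  define r2 where "r2 = (real k'/real k)^2"
  have r20: "0 \<le> r2" unfolding r2_def by simp
  have tau0: "0 \<le> \<tau>" unfolding \<tau>_def using k' by (intro divide_nonneg_pos) auto
  have extau: "exp (- real d * \<tau>) = r2" unfolding rd \<tau>_def r2_def by (rule exp_tau[OF k'])
  have g': "r2 * \<alpha>' + 2 * \<tau> < \<gamma>" using g unfolding r2_def \<tau>_def .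
  show ?thesis
  proof (cases "1/2 \<le> \<tau>")
    case True
    have "0 \<le> r2 * \<alpha>'" using r20 a'0 by simp
    then have g1: "1 < \<gamma>" using g' True by linarith
    obtain S where S: "S \<subseteq> C" "card S = k" using obtain_subset_with_card_n[OF kC] by blast
    have "undominated \<gamma> V C P S" unfolding undominated_def
    proof
      fix a assume "a \<in> C"
      have "card {v\<in>V. \<forall>b\<in>S. (a, b) \<in> P v} \<le> card V" using finV by (intro card_mono) auto
      then have "dom_frac V P a S \<le> 1" unfolding dom_frac_def using npos n_def by (simp add: divide_simps)
      then show "dom_frac V P a S < \<gamma>" using g1 by simp
    qed
    then show ?thesis using S by blast
  next
    case False
    then have tauh: "\<tau> < 1/2" by simp
    define gg where "gg = \<gamma> - r2 * \<alpha>' - 2 * \<tau>"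
    have gg0: "0 < gg" using g' unfolding gg_def by simp
    define \<rho> where "\<rho> = min (gg/4) ((1/2 - \<tau>)/2)"
    have rho0: "0 < \<rho>" unfolding \<rho>_def using gg0 tauh by simp
    define \<tau>' where "\<tau>' = \<tau> + \<rho>"
    have rh1: "\<rho> \<le> gg/4" "\<rho> \<le> (1/2 - \<tau>)/2" unfolding \<rho>_def by (rule min.cobounded1, rule min.cobounded2)
    have rh2: "4 * \<rho> \<le> gg" "4 * \<rho> \<le> 1 - 2 * \<tau>" using rh1 by (simp_all add: field_simps)
    have tp1: "2 * \<tau>' \<le> 1" unfolding \<tau>'_def using rh2 tauh by argo
    have tp2: "r2 * \<alpha>' + 2 * \<tau>' < \<gamma>" unfolding \<tau>'_def using rh2 gg0 unfolding gg_def by argo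
    define \<epsilon> where "\<epsilon> = \<tau>' * \<rho> / 2"
    have eps: "0 < \<epsilon>" unfolding \<epsilon>_def \<tau>'_def using tau0 rho0 by simp
    define j where "j = nat \<lceil>2 * \<tau>' * real n\<rceil>"
    have tpn0: "0 \<le> 2 * \<tau>' * real n" unfolding \<tau>'_def using tau0 rho0 npos by simp
    have an: "2 * \<tau>' * real n \<le> 1 * real n" using tp1 npos by (intro mult_right_mono) auto
    have jn: "j \<le> card V" unfolding j_def n_def[symmetric] using an by simp
    have jge: "2 * \<tau>' * real n \<le> real j" "real j < 2 * \<tau>' * real n + 1"
      unfolding j_def using ceil_bounds[OF tpn0] by auto
    obtain T0 where T0: "\<forall>T\<ge>T0. \<exists>cs. length cs = T \<and> set cs \<subseteq> C \<and> (\<forall>a\<in>C. \<forall>B. B \<subseteq> V \<and> card B = j \<longrightarrow>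
         real T * real (card V) * (real j^2/(2*real (card V)^2) - \<epsilon>) \<le> real (\<Sum>v\<in>B. card {i\<in>{..<T}. cs!i = a \<or> (cs!i, a) \<in> P v}))"
      using lemP[OF el Cne jn eps] by blast
    define T where "T = max T0 (nat \<lceil>2/\<rho>\<rceil> + 1)"
    have T1: "T \<ge> 1" unfolding T_def by simp
    have Tpos: "0 < real T" using T1 by simp
    have Td: "2/\<rho> \<le> real T"
    proof -
      have "2/\<rho> \<le> real (nat \<lceil>2/\<rho>\<rceil>)" by (rule real_nat_ceiling_ge)
      also have "\<dots> \<le> real T"
      proof (rule of_nat_mono)
        have "nat \<lceil>2/\<rho>\<rceil> + 1 \<le> T" unfolding T_def by (rule max.cobounded2)
        then show "nat \<lceil>2/\<rho>\<rceil> \<le> T" by (rule le_trans[OF le_add1])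
      qed
      finally show ?thesis .
    qed
    have invT: "1 / real T \<le> \<rho>/2" using Td rho0 Tpos by (simp add: divide_simps mult.commute)
    obtain cs where cs: "length cs = T" "set cs \<subseteq> C" "\<forall>a\<in>C. \<forall>B. B \<subseteq> V \<and> card B = j \<longrightarrow>
         real T * real (card V) * (real j^2/(2*real (card V)^2) - \<epsilon>) \<le> real (\<Sum>v\<in>B. card {i\<in>{..<T}. cs!i = a \<or> (cs!i, a) \<in> P v})"
    proof -
      have "T0 \<le> T" unfolding T_def by simp
      then show ?thesis using T0 that by blast
    qed
    define s0 where "s0 = nat \<lceil>\<tau> * real T\<rceil>"
    have s0a: "\<tau> * real T \<le> real s0" "real s0 < \<tau> * real T + 1"
      unfolding s0_def using ceil_bounds[of "\<tau> * real T"] tau0 Tpos by auto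
    have s0T: "s0 \<le> T"
    proof -
      have "\<tau> * real T \<le> 1 * real T" using tauh Tpos by (intro mult_right_mono) auto
      then show ?thesis unfolding s0_def by simp
    qed
    define \<sigma> where "\<sigma> = real s0 / real T"
    have sig: "\<tau> \<le> \<sigma>" "\<sigma> \<le> \<tau> + \<rho>/2" "\<sigma> \<le> 1"
    proof -
      show "\<tau> \<le> \<sigma>" unfolding \<sigma>_def using s0a Tpos by (simp add: divide_simps)
      have "\<sigma> < \<tau> + 1 / real T" unfolding \<sigma>_def using s0a Tpos by (simp add: divide_simps)
      then show "\<sigma> \<le> \<tau> + \<rho>/2" using invT by linarith
      show "\<sigma> \<le> 1" unfolding \<sigma>_def using s0T Tpos by (simp add: divide_simps)
    qed
    obtain f where f: "f \<in> Fs d T"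
      "real (card {v\<in>V. s0 \<le> Nq P cs d v f}) * real T ^ d \<le> real (card V) * real (T - s0) ^ d"
      using sample2[OF el cs(2) cs(1) T1 d1, of s0] by blast
    define Z where "Z = {v\<in>V. s0 \<le> Nq P cs d v f}"
    have ZV: "Z \<subseteq> V" unfolding Z_def by auto
    have Zb: "real (card Z) \<le> real n * r2"
    proof -
      have e1: "real (T - s0) = real T * (1 - \<sigma>)" unfolding \<sigma>_def using s0T Tpos by (simp add: field_simps)
      have "real (card Z) * real T ^ d \<le> (real n * (1 - \<sigma>) ^ d) * real T ^ d"
        using f(2) unfolding Z_def n_def e1 by (simp add: power_mult_distrib mult_ac)
      moreover have "0 < real T ^ d" using Tpos by simp
      ultimately have "real (card Z) \<le> real n * (1 - \<sigma>) ^ d" by (rule mult_right_le_imp_le)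
      also have "(1 - \<sigma>) ^ d \<le> (1 - \<tau>) ^ d" using sig by (intro power_mono) auto
      also have "\<dots> \<le> exp (- \<tau>) ^ d"
        using sig tauh by (intro power_mono) (auto simp: exp_ge_add_one_self[of "-\<tau>", simplified])
      also have "\<dots> = exp (real d * (- \<tau>))" by (rule exp_of_nat_mult[symmetric])
      also have "\<dots> = r2" using extau by simp
      finally show ?thesis using npos by (simp add: mult_left_mono)
    qed
    obtain S' where S': "S' \<subseteq> C" "card S' \<le> k'"
      "\<And>a. a \<in> C \<Longrightarrow> real (card {v\<in>Z. \<forall>b\<in>S'. (a, b) \<in> P v}) \<le> \<alpha>' * real (card Z)"
    proof (cases "Z = {}")
      case True
      then show ?thesis using that[of "{}"] by simp
    next
      case False
      have elZ: "election Z C P" using el ZV False finV unfolding election_def by (auto intro: finite_subset)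
      obtain S where S: "S \<subseteq> C" "card S = k'" "undominated \<alpha>' Z C P S"
      proof -
        have "k' \<le> card C" using kC k' by linarith
        then show ?thesis using H elZ that by blast
      qed
      have cZ: "0 < real (card Z)" using False finV ZV by (simp add: card_gt_0_iff finite_subset)
      show ?thesis
      proof (rule that[of S])
        fix a assume "a \<in> C"
        then have "dom_frac Z P a S < \<alpha>'" using S(3) unfolding undominated_def by blast
        then show "real (card {v\<in>Z. \<forall>b\<in>S. (a, b) \<in> P v}) \<le> \<alpha>' * real (card Z)"
          unfolding dom_frac_def using cZ by (simp add: divide_simps)
      qed (use S in auto)
    qed
    define U where "U = (\<lambda>l. cs!(f l)) ` {..<d}"
    have U: "U \<subseteq> C" "card U \<le> d" using committee[OF cs(2), of f d] f(1) cs(1) unfolding U_def by auto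
    have finS': "finite S'" using S'(1) finC by (rule finite_subset)
    have finU: "finite U" using U(1) finC by (rule finite_subset)
    have cUS: "card (U \<union> S') \<le> k"
    proof -
      have "card (U \<union> S') \<le> card U + card S'" by (rule card_Un_le)
      then show ?thesis using U(2) S'(2) k' unfolding d_def by linarith
    qed
    obtain W where W: "U \<union> S' \<subseteq> W" "W \<subseteq> C" "card W = k"
      using pad[OF finC _ cUS kC] U(1) S'(1) by blast
    have "undominated \<gamma> V C P W"
      unfolding undominated_def
    proof
      fix a assume a: "a \<in> C"
      define bad where "bad = {v\<in>V. \<forall>b\<in>W. (a, b) \<in> P v}"
      define bad1 where "bad1 = {v\<in>Z. \<forall>b\<in>S'. (a, b) \<in> P v}"
      define bad2 where "bad2 = {v\<in>V - Z. \<forall>l<d. (a, cs!(f l)) \<in> P v}"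
      have sub: "bad \<subseteq> bad1 \<union> bad2"
      proof
        fix v assume v: "v \<in> bad"
        show "v \<in> bad1 \<union> bad2"
        proof (cases "v \<in> Z")
          case True
          then show ?thesis using v W(1) unfolding bad_def bad1_def by auto
        next
          case False
          have "\<forall>l<d. (a, cs!(f l)) \<in> P v"
          proof (intro allI impI)
            fix l assume "l < d"
            then have "cs!(f l) \<in> W" using W(1) unfolding U_def by auto
            then show "(a, cs!(f l)) \<in> P v" using v unfolding bad_def by auto
          qed
          then show ?thesis using v False unfolding bad_def bad2_def by auto
        qed
      qed
      have fin12: "finite bad1" "finite bad2" using finV ZV unfolding bad1_def bad2_def
        by (auto intro: finite_subset)
      have b2: "card bad2 < j"
      proof (rule ccontr)
        assume "\<not> card bad2 < j"
        then have "j \<le> card bad2" by simp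
        then obtain B where B: "B \<subseteq> bad2" "card B = j" by (meson obtain_subset_with_card_n)
        have BV: "B \<subseteq> V" using B unfolding bad2_def by auto
        define Q where "Q v = card {i\<in>{..<T}. cs!i = a \<or> (cs!i, a) \<in> P v}" for v
        have L: "real T * real n * (real j^2/(2*real n^2) - \<epsilon>) \<le> real (\<Sum>v\<in>B. Q v)"
          using cs(3) a BV B(2) unfolding Q_def n_def by blast
        have Qle: "Q v \<le> s0" if v: "v \<in> B" for v
        proof -
          have vV: "v \<in> V" "v \<notin> Z" using v B(1) unfolding bad2_def by auto
          have "\<forall>l<d. (a, cs!(f l)) \<in> P v" using v B(1) unfolding bad2_def by auto
          then have "Q v \<le> Nq P cs d v f" unfolding Q_def using bad_le[OF el vV(1) cs(2) d1, of f a] f(1) cs(1) by simp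
          moreover have "Nq P cs d v f < s0" using vV unfolding Z_def by auto
          ultimately show ?thesis by simp
        qed
        have "(\<Sum>v\<in>B. Q v) \<le> (\<Sum>v\<in>B. s0)" using Qle by (intro sum_mono) auto
        then have "(\<Sum>v\<in>B. Q v) \<le> j * s0" using B(2) by simp
        then have "real (\<Sum>v\<in>B. Q v) \<le> real (j * s0)" by (simp only: of_nat_le_iff)
        with L have L2: "real T * real n * (real j^2/(2*real n^2) - \<epsilon>) \<le> real j * real s0" by simp
        define \<beta> where "\<beta> = real j / real n"
        have b: "2 * \<tau>' \<le> \<beta>" unfolding \<beta>_def using jge(1) npos by (simp add: divide_simps)
        have "\<beta>^2/2 - \<epsilon> \<le> (real j * real s0) / (real T * real n)"
          using L2 Tpos npos unfolding \<beta>_def by (simp add: pos_le_divide_eq power_divide mult.commute)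
        also have "\<dots> = \<beta> * \<sigma>"
          unfolding \<beta>_def \<sigma>_def using Tpos npos by (simp add: field_simps)
        finally have "\<beta>^2/2 - \<epsilon> \<le> \<beta> * \<sigma>" .
        moreover have "\<beta> * \<sigma> < \<beta>^2/2 - \<epsilon>"
          by (rule final2[OF rho0 \<tau>'_def tau0 b sig(2) \<epsilon>_def])
        ultimately show False by simp
      qed
      have "card bad \<le> card (bad1 \<union> bad2)" using sub fin12 by (intro card_mono) auto
      also have "\<dots> \<le> card bad1 + card bad2" by (rule card_Un_le)
      finally have cb: "real (card bad) \<le> real (card bad1) + real (card bad2)" by simp
      have "real (card bad1) \<le> \<alpha>' * real (card Z)" using S'(3)[OF a] unfolding bad1_def .
      also have "\<dots> \<le> \<alpha>' * (real n * r2)" using Zb a'0 by (rule mult_left_mono)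
      finally have cb1: "real (card bad1) \<le> \<alpha>' * r2 * real n" by (simp add: mult_ac)
      have cb2: "real (card bad2) < 2 * \<tau>' * real n" using b2 jge(2) by linarith
      have "(r2 * \<alpha>' + 2 * \<tau>') * real n < \<gamma> * real n" using tp2 npos by (intro mult_strict_right_mono) auto
      then have "real (card bad) < \<gamma> * real n" using cb cb1 cb2 by (simp add: algebra_simps)
      then show "dom_frac V P a W < \<gamma>"
        unfolding dom_frac_def bad_def[symmetric] n_def[symmetric] using npos by (simp add: divide_simps)
    qed
    then show ?thesis using W by blast
  qed
qed



definition Sa :: "nat \<Rightarrow> real set" where
  "Sa k = {\<alpha>. \<forall>V C P. election V C P \<and> k \<le> card C \<longrightarrow>
      (\<exists>S. S \<subseteq> C \<and> card S = k \<and> undominated \<alpha> V C P S)}"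

lemma alpha_Sa: "alpha k = Inf (Sa k)"
  unfolding alpha_def Sa_def by simp


lemma Sa_gt1:
  assumes "1 < \<alpha>" shows "\<alpha> \<in> Sa k"
  unfolding Sa_def
proof (intro CollectI allI impI)
  fix V C P assume a: "election V C P \<and> k \<le> card C"
  then obtain S where S: "S \<subseteq> C" "card S = k" using obtain_subset_with_card_n by blast
  have finV: "finite V" and Vne: "V \<noteq> {}" using a by (auto simp: election_def)
  have np: "0 < real (card V)" using finV Vne by (simp add: card_gt_0_iff)
  have "undominated \<alpha> V C P S" unfolding undominated_def
  proof
    fix x assume "x \<in> C"
    have "card {v\<in>V. \<forall>b\<in>S. (x, b) \<in> P v} \<le> card V" using finV by (intro card_mono) auto
    then have "dom_frac V P x S \<le> 1" unfolding dom_frac_def using np by (simp add: divide_simps)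
    then show "dom_frac V P x S < \<alpha>" using assms by simp
  qed
  then show "\<exists>S. S \<subseteq> C \<and> card S = k \<and> undominated \<alpha> V C P S" using S by blast
qed

lemma Sa_pos:
  assumes k: "k \<ge> 1" and a: "\<alpha> \<in> Sa k" shows "0 < \<alpha>"
proof -
  define P :: "nat \<Rightarrow> (nat \<times> nat) set" where "P v = {(a, b). a < b \<and> b < k}" for v
  have el: "election {0} {..<k} P"
    unfolding election_def strict_linear_order_on_def P_def
    by (auto simp: trans_def irrefl_def total_on_def)
  then have "\<exists>S. S \<subseteq> {..<k} \<and> card S = k \<and> undominated \<alpha> {0} {..<k} P S"
    using a unfolding Sa_def by simp
  then obtain S where S: "S \<subseteq> {..<k}" "card S = k" "undominated \<alpha> {0} {..<k} P S"
    by blast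
  have "0 \<in> {..<k}" using k by simp
  then have "dom_frac {0} P 0 S < \<alpha>" using S(3) unfolding undominated_def by blast
  moreover have "0 \<le> dom_frac {0} P 0 S" unfolding dom_frac_def by simp
  ultimately show ?thesis by simp
qed

lemma Sa_ne: "Sa k \<noteq> {}" using Sa_gt1[of 2 k] by auto

lemma Sa_bdd: "k \<ge> 1 \<Longrightarrow> bdd_below (Sa k)"
  unfolding bdd_below_def using Sa_pos by (meson less_imp_le)

lemma alpha_nonneg: "k \<ge> 1 \<Longrightarrow> 0 \<le> alpha k"
  unfolding alpha_Sa using Sa_ne Sa_pos by (meson cInf_greatest less_imp_le)

lemma alpha_le: "k \<ge> 1 \<Longrightarrow> \<alpha> \<in> Sa k \<Longrightarrow> alpha k \<le> \<alpha>"
  unfolding alpha_Sa using Sa_bdd cInf_lower by blast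

lemma alpha_le1: "k \<ge> 1 \<Longrightarrow> alpha k \<le> 1"
proof (rule field_le_epsilon)
  fix e :: real assume "k \<ge> 1" "0 < e"
  then show "alpha k \<le> 1 + e" using alpha_le Sa_gt1[of "1 + e" k] by simp
qed

lemma part1:
  assumes k: "k \<ge> 1"
  shows "alpha k / (1 - ln (alpha k)) \<le> 2 / (real k + 1)"
proof -
  define A where "A = alpha k"
  define c where "c = 2 / (real k + 1)"
  have c0: "0 < c" unfolding c_def by simp
  have A0: "0 \<le> A" "A \<le> 1" unfolding A_def using alpha_nonneg alpha_le1 k by auto
  show ?thesis
  proof (cases "A = 0")
    case True
    then show ?thesis unfolding A_def[symmetric] by simp
  next
    case False
    then have Ap: "0 < A" using A0 by simp
    have lnA: "ln A \<le> 0" using Ap A0 by simp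
    have den: "0 < 1 - ln A" using lnA by simp
    show ?thesis
    proof (rule ccontr)
      assume "\<not> ?thesis"
      then have "c < A / (1 - ln A)" unfolding A_def c_def by simp
      then have "c * (1 - ln A) < A" using den by (simp add: pos_less_divide_eq)
      define G where "G = A - c * (1 - ln A)"
      have G0: "0 < G" unfolding G_def using \<open>c * (1 - ln A) < A\<close> by simp
      define t where "t = min (1/2) (G / (2 * (A + 2 * c)))"
      have "0 < G / (2 * (A + 2 * c))" using G0 Ap c0 by simp
      then have t0a: "0 < t" unfolding t_def by simp
      have t0b: "t \<le> 1/2" unfolding t_def by (rule min.cobounded1)
      note t0 = t0a t0b
      have tG: "t * (A + 2 * c) \<le> G / 2"
      proof -
        have "t \<le> G / (2 * (A + 2 * c))" unfolding t_def by (rule min.cobounded2)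
        then have "t * (A + 2 * c) \<le> G / (2 * (A + 2 * c)) * (A + 2 * c)"
          using Ap c0 by (intro mult_right_mono) auto
        also have "\<dots> = G / 2" using Ap c0 by (simp add: field_simps)
        finally show ?thesis .
      qed
      define \<theta> where "\<theta> = 1 - t"
      have th: "1/2 \<le> \<theta>" "\<theta> < 1" unfolding \<theta>_def using t0 by auto
      define \<alpha> where "\<alpha> = A * \<theta>"
      have al: "0 < \<alpha>" "\<alpha> < A" unfolding \<alpha>_def using Ap th by auto
      have al1: "\<alpha> < 1" using al A0 by simp
      have lnth: "- 2 * t \<le> ln \<theta>"
      proof -
        have "ln (1/\<theta>) \<le> 1/\<theta> - 1" using th by (intro ln_le_minus_one) auto
        then have "- ln \<theta> \<le> 1/\<theta> - 1" using th by (simp add: ln_div)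
        moreover have "1/\<theta> - 1 = t / \<theta>" unfolding \<theta>_def using th unfolding \<theta>_def by (simp add: field_simps)
        moreover have "t / \<theta> \<le> 2 * t" using th t0 by (simp add: divide_simps)
        ultimately show ?thesis by linarith
      qed
      have "ln \<alpha> = ln A + ln \<theta>" unfolding \<alpha>_def using Ap th by (simp add: ln_mult)
      then have "\<alpha> - c * (1 - ln \<alpha>) = G - A * t + c * ln \<theta>"
        unfolding G_def \<alpha>_def \<theta>_def by (simp add: algebra_simps)
      also have "\<dots> \<ge> G - A * t - 2 * c * t"
      proof -
        have "c * (- 2 * t) \<le> c * ln \<theta>" using lnth c0 by (intro mult_left_mono) auto
        then show ?thesis by (simp add: algebra_simps)
      qed
      finally have "\<alpha> - c * (1 - ln \<alpha>) \<ge> G - t * (A + 2 * c)" by (simp add: algebra_simps)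
      then have "0 < \<alpha> - c * (1 - ln \<alpha>)" using tG G0 by linarith
      then have big: "2 / (real k + 1) * (1 - ln \<alpha>) < \<alpha>" unfolding c_def by simp
      have "\<alpha> \<in> Sa k" unfolding Sa_def using main1[OF k al(1) al1 big] by blast
      then have "A \<le> \<alpha>" unfolding A_def using alpha_le[OF k] by blast
      then show False using al by simp
    qed
  qed
qed

lemma part2:
  assumes k2: "k \<ge> 2" and k': "k' \<in> {1..<k}"
  shows "alpha k \<le> (real k' / real k)^2 * alpha k' + 4 * ln (real k / real k') / (real k - real k')"
proof (rule field_le_epsilon)
  fix e :: real assume e: "0 < e"
  have k1: "1 \<le> k'" "k' < k" using k' by auto
  have k0: "k \<ge> 1" using k2 by simp
  define A' where "A' = alpha k'"
  define r2 where "r2 = (real k' / real k)^2"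
  define \<tau> where "\<tau> = 2 * ln (real k / real k') / (real k - real k')"
  have r2b: "0 \<le> r2" "r2 \<le> 1" unfolding r2_def using k1 by (auto simp: power_le_one)
  have "Inf (Sa k') < A' + e/2" unfolding A'_def alpha_Sa using e by simp
  then obtain x where x: "x \<in> Sa k'" "x < A' + e/2" using cInf_lessD[OF Sa_ne] by blast
  have x0: "0 < x" using Sa_pos[OF k1(1) x(1)] .
  have H: "\<forall>V C P. election V C P \<and> k' \<le> card C \<longrightarrow> (\<exists>S. S \<subseteq> C \<and> card S = k' \<and> undominated x V C P S)"
    using x(1) unfolding Sa_def by blast
  define \<gamma> where "\<gamma> = r2 * x + 2 * \<tau> + e/2"
  have g: "(real k'/real k)^2 * x + 2 * (2 * ln (real k / real k') / (real k - real k')) < \<gamma>"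
    unfolding \<gamma>_def r2_def \<tau>_def using e by simp
  have "\<gamma> \<in> Sa k" unfolding Sa_def using main2[OF k1 less_imp_le[OF x0] H g] by blast
  then have "alpha k \<le> \<gamma>" using alpha_le[OF k0] by blast
  also have "\<gamma> \<le> r2 * A' + 2 * \<tau> + e"
  proof -
    have "r2 * x \<le> r2 * (A' + e/2)" using x(2) r2b by (intro mult_left_mono) auto
    also have "\<dots> = r2 * A' + r2 * (e/2)" by (simp add: algebra_simps)
    also have "r2 * (e/2) \<le> e/2" using r2b e by (simp add: mult_le_cancel_right1)
    finally show ?thesis unfolding \<gamma>_def by simp
  qed
  also have "r2 * A' + 2 * \<tau> = (real k' / real k)^2 * alpha k' + 4 * ln (real k / real k') / (real k - real k')"
    unfolding r2_def A'_def \<tau>_def by simp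
  finally show "alpha k \<le> (real k' / real k)^2 * alpha k' + 4 * ln (real k / real k') / (real k - real k') + e" .
qed

theorem theorem6:
  fixes k :: nat
  assumes "k \<ge> 1"
  shows "alpha k / (1 - ln (alpha k)) \<le> 2 / (real k + 1)
    \<and> (k \<ge> 2 \<longrightarrow> alpha k \<le> Min ((\<lambda>k'. (real k' / real k)^2 * alpha k'
          + 4 * ln (real k / real k') / (real k - real k')) ` {1..<k}))"
proof (intro conjI impI)
  show "alpha k / (1 - ln (alpha k)) \<le> 2 / (real k + 1)" using part1[OF assms] .
next
  assume k2: "k \<ge> 2"
  have ne: "{1..<k} \<noteq> {}" using k2 by auto
  show "alpha k \<le> Min ((\<lambda>k'. (real k' / real k)^2 * alpha k'
          + 4 * ln (real k / real k') / (real k - real k')) ` {1..<k})"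
    using part2[OF k2] ne by (subst Min_ge_iff) auto
qed


end
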